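(* Let $\delta=x^{\mathbf d}f(\theta)$ be a homogeneous differential operator of degree $\mathbf d$ (with $\mathbf d\ne\mathbf 0$, $-\mathbf d\in S$), let $\mathcal B\subseteq\mathbb N^n$ be compatible with $\mathbf d$, and let $I=(x^{\mathbf a}\mid \mathbf a\in W_{\mathcal B})$. Then $I$ is $\delta$-compatible. In particular, if $\mathbf b\in W_{\mathcal B}$ and $\operatorname{val}(\mathbf b)$ is finite, then $\operatorname{vpt}(\mathbf b)\in W_{\mathcal B}$.
   Context: Standing notation. Fix $d\ge 1$. Let $\sigma\subseteq\mathbb R^d$ be a full-dimensional, strongly convex rational polyhedral cone, so $\sigma^\vee$ is full-dimensional and strongly convex. $S=\sigma^\vee\cap\mathbb Z^d$, $R=\mathbb C[S]$ with monomial basis $x^{\mathbf a}$, $\mathbf a\in S$. $h_1,\dots,h_n$ are the primitive support functions of the facets of $\sigma^\vee$, so $S=\{\mathbf a\in\mathbb Z^d:h_i(\mathbf a)\ge0\ \forall i\}$. $(g,m)!=\prod_{j=0}^m(g-j)$ for $m\ge0$, $=1$ for $m<0$; $H_{\mathbf d}=\prod_i(h_i,h_i(-\mathbf d)-1)!$. For $f$ divisible by $H_{\mathbf d}$, $\delta=x^{\mathbf d}f(\theta)$ acts by $\delta(x^{\mathbf a})=f(\mathbf a)x^{\mathbf a+\mathbf d}$. $I$ is $\delta$-compatible if $\delta(I)\subseteq I$. $V_{\mathrm{mon}}(f)=\{\mathbf a\in\mathbb Z^d:f(\mathbf a)=0\}$. Assume $\mathbf d\ne\mathbf 0$ and $-\mathbf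 d\in S$; write $\mathbf d=q\mathbf e$ with $q\in\mathbb Z_{\ge1}$ and $\mathbf e\in\mathbb Z^d$ primitive. For $\mathbf a\in\mathbb Z^d$ let $\operatorname{val}(\mathbf a)=\inf\{t\in\mathbb R:\mathbf a+t\mathbf d\in V_{\mathrm{mon}}(f)\}\in\mathbb R\cup\{\pm\infty\}$ (with $\inf\emptyset=+\infty$). When $\operatorname{val}(\mathbf a)$ is finite, let $\operatorname{pval}(\mathbf a)=\max\{t\in[\operatorname{val}(\mathbf a),\operatorname{val}(\mathbf a)+1):\mathbf a+t\mathbf d\in V_{\mathrm{mon}}(f)\}$ (such $t$ lie in $\frac1q\mathbb Z$, so the max exists) and $\operatorname{vpt}(\mathbf a)=\mathbf a+\operatorname{pval}(\mathbf a)\mathbf d\in\mathbb Z^d$. A tuple $\beta\in\mathbb N^n$ is compatible with $\mathbf d$ if for every $i$, $\beta_i=0$ or $h_i(\mathbf d)=0$; a set $\mathcal B\subseteq\mathbb N^n$ is compatible with $\mathbf d$ if each of its elements is. $W_\beta=\{\mathbf a\in S: h_i(\mathbf a)\ge\beta_i\ \forall i\}$ and $W_{\mathcal B}=\bigcup_{\beta\in\mathcal B}W_\beta$. *)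

theory Defs
  imports "HOL-Analysis.Analysis"
begin

definition rvec :: "int^'d \<Rightarrow> real^'d" where
  "rvec a = (\<chi> j. real_of_int (a $ j))"

definition hval :: "int^'d \<Rightarrow> int^'d \<Rightarrow> int" where
  "hval h a = (\<Sum>j\<in>UNIV. h $ j * a $ j)"

definition rat_poly_cone :: "(real^'d) set \<Rightarrow> bool" where
  "rat_poly_cone \<sigma> \<longleftrightarrow> (\<exists>V :: (int^'d) set. finite V \<and>
     \<sigma> = {(\<Sum>v\<in>V. c v *\<^sub>R rvec v) | c. \<forall>v\<in>V. 0 \<le> c v})"

definition strongly_convex :: "(real^'d) set \<Rightarrow> bool" where
  "strongly_convex \<sigma> \<longleftrightarrow> (\<forall>x. x \<in> \<sigma> \<and> - x \<in> \<sigma> \<longrightarrow> x = 0)"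

definition full_dimensional :: "(real^'d) set \<Rightarrow> bool" where
  "full_dimensional \<sigma> \<longleftrightarrow> interior \<sigma> \<noteq> {}"

definition dual_cone :: "(real^'d) set \<Rightarrow> (real^'d) set" where
  "dual_cone \<sigma> = {u. \<forall>v\<in>\<sigma>. 0 \<le> u \<bullet> v}"

definition is_facet :: "(real^'d) set \<Rightarrow> (real^'d) set \<Rightarrow> bool" where
  "is_facet F C \<longleftrightarrow> F face_of C \<and> aff_dim F = aff_dim C - 1"

definition primitive_vec :: "int^'d \<Rightarrow> bool" where
  "primitive_vec h \<longleftrightarrow> h \<noteq> 0 \<and> (\<forall>k::int. (\<forall>j. k dvd h $ j) \<longrightarrow> k dvd 1)"

definition primitive_facet_support_fn :: "(real^'d) set \<Rightarrow> int^'d \<Rightarrow> bool" where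
  "primitive_facet_support_fn C h \<longleftrightarrow> primitive_vec h \<and> (\<forall>u\<in>C. 0 \<le> rvec h \<bullet> u)
     \<and> is_facet (C \<inter> {u. rvec h \<bullet> u = 0}) C"

definition semigrp :: "(real^'d) set \<Rightarrow> (int^'d) set" where
  "semigrp \<sigma> = {a. rvec a \<in> dual_cone \<sigma>}"

definition ffact :: "int \<Rightarrow> int \<Rightarrow> int" where
  "ffact g m = (if m < 0 then 1 else (\<Prod>j\<in>{0..m}. g - j))"

text \<open>H_d as a function on Z^d (h_1..h_n are h 0 .. h (n-1)).\<close>
definition Hd :: "(nat \<Rightarrow> int^'d) \<Rightarrow> nat \<Rightarrow> int^'d \<Rightarrow> int^'d \<Rightarrow> int" where
  "Hd h n d a = (\<Prod>i<n. ffact (hval (h i) a) (hval (h i) (- d) - 1))"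

text \<open>Polynomial functions with complex coefficients in d variables, evaluated on Z^d
  (a polynomial is determined by its values on Z^d).\<close>
definition poly_fun :: "(int^'d \<Rightarrow> complex) \<Rightarrow> bool" where
  "poly_fun p \<longleftrightarrow> (\<exists>(K :: (nat^'d) set) c. finite K \<and>
     (\<forall>a. p a = (\<Sum>k\<in>K. c k * (\<Prod>j\<in>UNIV. (of_int (a $ j)) ^ (k $ j)))))"

definition sgring :: "(int^'d) set \<Rightarrow> (int^'d \<Rightarrow> complex) set" where
  "sgring S = {r. finite {a. r a \<noteq> 0} \<and> {a. r a \<noteq> 0} \<subseteq> S}"

definition monom :: "int^'d \<Rightarrow> (int^'d \<Rightarrow> complex)" where
  "monom a = (\<lambda>b. if b = a then 1 else 0)"

definition conv :: "(int^'d \<Rightarrow> complex) \<Rightarrow> (int^'d \<Rightarrow> complex) \<Rightarrow> (int^'d \<Rightarrow> complex)" where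
  "conv r s = (\<lambda>c. \<Sum>a\<in>{a. r a \<noteq> 0}. r a * s (c - a))"

definition is_ideal :: "(int^'d) set \<Rightarrow> (int^'d \<Rightarrow> complex) set \<Rightarrow> bool" where
  "is_ideal S I \<longleftrightarrow> I \<subseteq> sgring S \<and> (\<lambda>_. 0) \<in> I \<and> (\<forall>r\<in>I. \<forall>s\<in>I. (\<lambda>c. r c + s c) \<in> I)
     \<and> (\<forall>r\<in>sgring S. \<forall>s\<in>I. conv r s \<in> I)"

definition mono_ideal :: "(int^'d) set \<Rightarrow> (int^'d) set \<Rightarrow> (int^'d \<Rightarrow> complex) set" where
  "mono_ideal S G = \<Inter> {I. is_ideal S I \<and> monom ` G \<subseteq> I}"

text \<open>delta = x^d f(theta): delta(x^a) = f(a) x^(a+d), extended linearly.\<close>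
definition delta_op :: "(int^'d \<Rightarrow> complex) \<Rightarrow> int^'d \<Rightarrow> (int^'d \<Rightarrow> complex) \<Rightarrow> (int^'d \<Rightarrow> complex)" where
  "delta_op f d r = (\<lambda>b. f (b - d) * r (b - d))"

definition delta_compatible :: "(int^'d \<Rightarrow> complex) \<Rightarrow> int^'d \<Rightarrow> (int^'d \<Rightarrow> complex) set \<Rightarrow> bool" where
  "delta_compatible f d I \<longleftrightarrow> (\<forall>r\<in>I. delta_op f d r \<in> I)"

definition W_beta :: "(nat \<Rightarrow> int^'d) \<Rightarrow> nat \<Rightarrow> (int^'d) set \<Rightarrow> (nat \<Rightarrow> nat) \<Rightarrow> (int^'d) set" where
  "W_beta h n S \<beta> = {a \<in> S. \<forall>i<n. int (\<beta> i) \<le> hval (h i) a}"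

definition W_set :: "(nat \<Rightarrow> int^'d) \<Rightarrow> nat \<Rightarrow> (int^'d) set \<Rightarrow> (nat \<Rightarrow> nat) set \<Rightarrow> (int^'d) set" where
  "W_set h n S B = (\<Union>\<beta>\<in>B. W_beta h n S \<beta>)"

definition compatible_tuple :: "(nat \<Rightarrow> int^'d) \<Rightarrow> nat \<Rightarrow> int^'d \<Rightarrow> (nat \<Rightarrow> nat) \<Rightarrow> bool" where
  "compatible_tuple h n d \<beta> \<longleftrightarrow> (\<forall>i<n. \<beta> i = 0 \<or> hval (h i) d = 0)"

text \<open>val(a) = inf {t real. a + t d in V_mon(f)}, in the extended reals (inf of empty = +infinity).\<close>
definition valf :: "(int^'d \<Rightarrow> complex) \<Rightarrow> int^'d \<Rightarrow> int^'d \<Rightarrow> ereal" where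
  "valf f d a = Inf {ereal t | t. \<exists>v. f v = 0 \<and> rvec v = rvec a + t *\<^sub>R rvec d}"

definition pval :: "(int^'d \<Rightarrow> complex) \<Rightarrow> int^'d \<Rightarrow> int^'d \<Rightarrow> real" where
  "pval f d a = Max {t. real_of_ereal (valf f d a) \<le> t \<and> t < real_of_ereal (valf f d a) + 1
        \<and> (\<exists>v. f v = 0 \<and> rvec v = rvec a + t *\<^sub>R rvec d)}"

definition vpt :: "(int^'d \<Rightarrow> complex) \<Rightarrow> int^'d \<Rightarrow> int^'d \<Rightarrow> int^'d" where
  "vpt f d a = (THE v. rvec v = rvec a + pval f d a *\<^sub>R rvec d)"

end

theory Submission
  imports Defs
begin


lemma rvec_add: "rvec (a + b) = rvec a + rvec b"
  by (simp add: rvec_def vec_eq_iff)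
lemma rvec_minus: "rvec (- a) = - rvec a"
  by (simp add: rvec_def vec_eq_iff)
lemma rvec_diff: "rvec (a - b) = rvec a - rvec b"
  by (simp add: rvec_def vec_eq_iff)
lemma rvec_smult: "rvec (k *s a) = real_of_int k *\<^sub>R rvec a"
  by (simp add: rvec_def vec_eq_iff)
lemma rvec_inj: "rvec a = rvec b \<longleftrightarrow> a = b"
  by (simp add: rvec_def vec_eq_iff)
lemma rvec_zero: "rvec 0 = 0"
  by (simp add: rvec_def vec_eq_iff)
lemma rvec_inner: "rvec g \<bullet> rvec a = real_of_int (hval g a)"
  by (simp add: rvec_def hval_def inner_vec_def)
lemma hval_add: "hval g (a + b) = hval g a + hval g b"
  by (simp add: hval_def algebra_simps sum.distrib)
lemma hval_minus: "hval g (- a) = - hval g a"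
  by (simp add: hval_def sum_negf)
lemma hval_diff: "hval g (a - b) = hval g a - hval g b"
  by (simp add: hval_def algebra_simps sum_subtractf)
lemma hval_smult: "hval g (k *s a) = k * hval g a"
  by (simp add: hval_def sum_distrib_left algebra_simps)

lemma Gcd_test: "Gcd (A::int set) \<ge> 0" "a \<in> A \<Longrightarrow> Gcd A dvd a" "(\<And>b. b \<in> A \<Longrightarrow> k dvd b) \<Longrightarrow> k dvd Gcd A"
  "Gcd A = 0 \<longleftrightarrow> A \<subseteq> {0}"
  by (auto simp: Gcd_dvd Gcd_greatest)




lemma sum_in_cchull:
  assumes "finite V" "V \<subseteq> W"
  shows "(\<forall>v\<in>V. 0 \<le> c v) \<longrightarrow> (\<Sum>v\<in>V. c v *\<^sub>R f v) \<in> convex_cone hull (f ` W)"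
  using assms
proof (induction V rule: finite_induct)
  case empty then show ?case by (simp add: convex_cone_hull_contains_0)
next
  case (insert x F)
  show ?case
  proof
    assume c: "\<forall>v\<in>insert x F. 0 \<le> c v"
    have "f x \<in> convex_cone hull (f ` W)" using insert.prems by (intro hull_inc) auto
    then have "c x *\<^sub>R f x \<in> convex_cone hull (f ` W)" using c by (intro convex_cone_hull_mul) auto
    moreover have "(\<Sum>v\<in>F. c v *\<^sub>R f v) \<in> convex_cone hull (f ` W)" using insert c by auto
    ultimately show "(\<Sum>v\<in>insert x F. c v *\<^sub>R f v) \<in> convex_cone hull (f ` W)"
      using insert by (simp add: convex_cone_hull_add)
  qed
qed

lemma sum_indic:
  assumes "finite V" "w \<in> V"
  shows "(\<Sum>v\<in>V. (if v = w then 1 else 0) *\<^sub>R g v) = (g w :: 'a::real_vector)"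
proof -
  have "(\<Sum>v\<in>V. (if v = w then 1 else 0) *\<^sub>R g v) = (\<Sum>v\<in>V. if v = w then g w else 0)"
    by (rule sum.cong) auto
  also have "\<dots> = g w" using assms by simp
  finally show ?thesis .
qed

lemma sigma_hull:
  fixes V :: "(int^'d) set"
  assumes fin: "finite V"
  shows "{(\<Sum>v\<in>V. c v *\<^sub>R rvec v) | c. \<forall>v\<in>V. 0 \<le> c v} = convex_cone hull (rvec ` V)"
    (is "?S = _")
proof
  show "?S \<subseteq> convex_cone hull (rvec ` V)"
    using sum_in_cchull[OF fin, of V] by blast
  have cc: "convex_cone ?S"
    unfolding convex_cone_iff
  proof (intro conjI ballI allI impI)
    show "0 \<in> ?S" by (rule CollectI, rule exI[of _ "\<lambda>_. 0"]) simp
  next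
    fix x y assume "x \<in> ?S" "y \<in> ?S"
    then obtain c1 c2 where c1: "x = (\<Sum>v\<in>V. c1 v *\<^sub>R rvec v)" "\<forall>v\<in>V. 0 \<le> c1 v"
      and c2: "y = (\<Sum>v\<in>V. c2 v *\<^sub>R rvec v)" "\<forall>v\<in>V. 0 \<le> c2 v" by auto
    show "x + y \<in> ?S"
      by (rule CollectI, rule exI[of _ "\<lambda>v. c1 v + c2 v"])
         (use c1 c2 in \<open>auto simp: scaleR_add_left sum.distrib\<close>)
  next
    fix x and a :: real assume "x \<in> ?S" "0 \<le> a"
    then obtain c1 where c1: "x = (\<Sum>v\<in>V. c1 v *\<^sub>R rvec v)" "\<forall>v\<in>V. 0 \<le> c1 v" by auto
    show "a *\<^sub>R x \<in> ?S"
      by (rule CollectI, rule exI[of _ "\<lambda>v. a * c1 v"])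
         (use c1 \<open>0 \<le> a\<close> in \<open>auto simp: scaleR_sum_right\<close>)
  qed
  have "rvec ` V \<subseteq> ?S"
  proof
    fix y assume "y \<in> rvec ` V"
    then obtain w where w: "w \<in> V" "y = rvec w" by auto
    show "y \<in> ?S"
      by (rule CollectI, rule exI[of _ "\<lambda>v. if v = w then 1 else 0"])
         (use w fin in \<open>auto simp: sum_indic\<close>)
  qed
  then show "convex_cone hull (rvec ` V) \<subseteq> ?S"
    by (rule hull_minimal) (rule cc)
qed

lemma dual_cone_gen:
  fixes V :: "(int^'d) set"
  assumes fin: "finite V"
    and sig: "\<sigma> = {(\<Sum>v\<in>V. c v *\<^sub>R rvec v) | c. \<forall>v\<in>V. 0 \<le> c v}"
  shows "dual_cone \<sigma> = {u. \<forall>v\<in>V. 0 \<le> u \<bullet> rvec v}"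
proof (intro set_eqI iffI CollectI ballI)
  fix u v assume u: "u \<in> dual_cone \<sigma>" and v: "v \<in> V"
  have "rvec v \<in> \<sigma>" unfolding sig
    by (rule CollectI, rule exI[of _ "\<lambda>x. if x = v then 1 else 0"])
         (use v fin in \<open>auto simp: sum_indic\<close>)
  then show "0 \<le> u \<bullet> rvec v" using u by (auto simp: dual_cone_def)
next
  fix u assume u: "u \<in> {u. \<forall>v\<in>V. 0 \<le> u \<bullet> rvec v}"
  show "u \<in> dual_cone \<sigma>" unfolding dual_cone_def
  proof (intro CollectI ballI)
    fix y assume "y \<in> \<sigma>"
    then obtain c where c: "y = (\<Sum>v\<in>V. c v *\<^sub>R rvec v)" "\<forall>v\<in>V. 0 \<le> c v" using sig by auto
    have "u \<bullet> y = (\<Sum>v\<in>V. c v * (u \<bullet> rvec v))" using c by (simp add: inner_sum_right)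
    also have "\<dots> \<ge> 0" using c u by (intro sum_nonneg) auto
    finally show "0 \<le> u \<bullet> y" .
  qed
qed




lemma dual_interior:
  fixes V :: "(int^'d) set" and \<sigma> :: "(real^'d) set"
  assumes fin: "finite V"
    and sig: "\<sigma> = {(\<Sum>v\<in>V. c v *\<^sub>R rvec v) | c. \<forall>v\<in>V. 0 \<le> c v}"
    and strongly: "strongly_convex \<sigma>"
  shows "interior (dual_cone \<sigma>) \<noteq> {}"
proof
  assume int0: "interior (dual_cone \<sigma>) = {}"
  have sh: "\<sigma> = convex_cone hull (rvec ` V)" using sigma_hull[OF fin] sig by simp
  have cl: "closed \<sigma>" unfolding sh by (rule closed_convex_cone_hull) (use fin in auto)
  have cv: "convex \<sigma>" unfolding sh by (rule convex_convex_cone_hull)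
  have z0: "0 \<in> \<sigma>" unfolding sh by (rule convex_cone_hull_contains_0)
  have cn: "\<And>x t. x \<in> \<sigma> \<Longrightarrow> 0 \<le> t \<Longrightarrow> t *\<^sub>R x \<in> \<sigma>" unfolding sh
    by (rule convex_cone_hull_mul)
  have bidual: "z \<in> \<sigma>" if z: "\<forall>u\<in>dual_cone \<sigma>. 0 \<le> z \<bullet> u" for z
  proof (rule ccontr)
    assume "z \<notin> \<sigma>"
    from separating_hyperplane_closed_point[OF cv cl this]
    obtain a b where ab: "a \<bullet> z < b" "\<forall>x\<in>\<sigma>. a \<bullet> x > b" by blast
    have b0: "b < 0" using ab(2) z0 by fastforce
    have "a \<in> dual_cone \<sigma>" unfolding dual_cone_def
    proof (intro CollectI ballI)
      fix x assume x: "x \<in> \<sigma>"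
      show "0 \<le> a \<bullet> x"
      proof (rule ccontr)
        assume neg: "\<not> 0 \<le> a \<bullet> x"
        define t where "t = b / (a \<bullet> x)"
        have t0: "0 \<le> t" unfolding t_def using neg b0 by (simp add: divide_nonpos_neg)
        have "a \<bullet> (t *\<^sub>R x) = b" unfolding t_def using neg by simp
        moreover have "a \<bullet> (t *\<^sub>R x) > b" using ab(2) cn[OF x t0] by blast
        ultimately show False by simp
      qed
    qed
    then have "0 \<le> z \<bullet> a" using z by blast
    then show False using ab(1) b0 by (simp add: inner_commute)
  qed
  have cvC: "convex (dual_cone \<sigma>)"
    unfolding convex_def dual_cone_def
    by (auto simp: inner_add_left intro!: add_nonneg_nonneg mult_nonneg_nonneg)
  obtain a b where a: "a \<noteq> 0" "dual_cone \<sigma> \<subseteq> {x. a \<bullet> x = b}"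
    using empty_interior_subset_hyperplane[OF cvC int0] by blast
  have "0 \<in> dual_cone \<sigma>" by (simp add: dual_cone_def)
  then have b: "b = 0" using a by auto
  have "a \<in> \<sigma>" using a b by (intro bidual) auto
  moreover have "- a \<in> \<sigma>" using a b by (intro bidual) auto
  ultimately show False using strongly a(1) unfolding strongly_convex_def by blast
qed




lemma primitive_of:
  fixes v :: "int^'d"
  assumes v0: "v \<noteq> 0"
  obtains g G where "primitive_vec g" "G > 0" "rvec v = real_of_int G *\<^sub>R rvec g"
proof -
  define G where "G = Gcd (range (\<lambda>j. v $ j))"
  have Gge: "G \<ge> 0" unfolding G_def by simp
  have "G \<noteq> 0" unfolding G_def using v0 by (auto simp: vec_eq_iff)
  with Gge have Gpos: "G > 0" by simp
  have Gdvd: "G dvd v $ j" for j unfolding G_def by (rule Gcd_dvd) auto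
  define g where "g = (\<chi> j. v $ j div G)"
  have vg: "v $ j = G * g $ j" for j unfolding g_def using Gdvd[of j] by simp
  have rv: "rvec v = real_of_int G *\<^sub>R rvec g"
    by (simp add: rvec_def vec_eq_iff vg)
  have "g \<noteq> 0" using v0 vg by (auto simp: vec_eq_iff)
  moreover have "k dvd 1" if k: "\<forall>j. k dvd g $ j" for k
  proof -
    have "k * G dvd v $ j" for j using k vg by (simp add: mult.commute mult_dvd_mono)
    then have "k * G dvd G" unfolding G_def by (intro Gcd_greatest) auto
    then have "k * G dvd 1 * G" by simp
    then show "k dvd 1" using \<open>G \<noteq> 0\<close> by (subst (asm) dvd_mult_cancel_right) simp
  qed
  ultimately have "primitive_vec g" unfolding primitive_vec_def by blast
  then show ?thesis using that Gpos rv by blast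
qed

lemma semigrp_facets:
  fixes \<sigma> :: "(real^'d) set" and h :: "nat \<Rightarrow> int^'d"
  assumes cone: "rat_poly_cone \<sigma>" and strongly: "strongly_convex \<sigma>"
    and facets: "bij_betw h {..<n} {g. primitive_facet_support_fn (dual_cone \<sigma>) g}"
  shows "a \<in> semigrp \<sigma> \<longleftrightarrow> (\<forall>i<n. 0 \<le> hval (h i) a)"
proof
  assume a: "a \<in> semigrp \<sigma>"
  show "\<forall>i<n. 0 \<le> hval (h i) a"
  proof (intro allI impI)
    fix i assume "i < n"
    then have "primitive_facet_support_fn (dual_cone \<sigma>) (h i)"
      using facets by (auto dest: bij_betwE)
    then have "0 \<le> rvec (h i) \<bullet> rvec a" using a
      by (auto simp: primitive_facet_support_fn_def semigrp_def)
    then show "0 \<le> hval (h i) a" by (simp add: rvec_inner)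
  qed
next
  assume hyp: "\<forall>i<n. 0 \<le> hval (h i) a"
  obtain V where fin: "finite V" and sig: "\<sigma> = {(\<Sum>v\<in>V. c v *\<^sub>R rvec v) | c. \<forall>v\<in>V. 0 \<le> c v}"
    using cone unfolding rat_poly_cone_def by blast
  define C where "C = dual_cone \<sigma>"
  have aff: "affine hull C = UNIV"
    unfolding C_def by (rule affine_hull_nonempty_interior, rule dual_interior[OF fin sig strongly])
  define hs where "hs v = {u::real^'d. (- rvec v) \<bullet> u \<le> 0}" for v
  define F0 where "F0 = hs ` (V - {0})"
  have finF0: "finite F0" unfolding F0_def using fin by simp
  have CF0: "C = \<Inter>F0"
  proof (intro set_eqI iffI)
    fix u assume "u \<in> C"
    then show "u \<in> \<Inter>F0" unfolding C_def dual_cone_gen[OF fin sig] F0_def hs_def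
      by (auto simp: inner_commute)
  next
    fix u assume u: "u \<in> \<Inter>F0"
    have "0 \<le> u \<bullet> rvec v" if "v \<in> V" for v
    proof (cases "v = 0")
      case True then show ?thesis by (simp add: rvec_zero)
    next
      case False then have "hs v \<in> F0" using that by (simp add: F0_def)
      then show ?thesis using u by (auto simp: hs_def inner_commute)
    qed
    then show "u \<in> C" unfolding C_def dual_cone_gen[OF fin sig] by blast
  qed
  define P where "P F \<longleftrightarrow> F \<subseteq> F0 \<and> \<Inter>F = C" for F
  obtain F where PF: "P F" and minF: "\<And>F'. P F' \<Longrightarrow> card F \<le> card F'"
    using ex_has_least_nat[of P F0 card] CF0 unfolding P_def by blast
  have FF0: "F \<subseteq> F0" and CF: "\<Inter>F = C" using PF by (auto simp: P_def)
  have finF: "finite F" using FF0 finF0 finite_subset by blast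
  have "\<forall>hh\<in>F. \<exists>v. v \<in> V - {0} \<and> hh = hs v" using FF0 unfolding F0_def by blast
  then obtain vv where vv: "\<And>hh. hh \<in> F \<Longrightarrow> vv hh \<in> V - {0} \<and> hh = hs (vv hh)" by metis
  have faceq: "- rvec (vv hh) \<noteq> 0 \<and> hh = {x. - rvec (vv hh) \<bullet> x \<le> 0}" if "hh \<in> F" for hh
  proof -
    have "vv hh \<noteq> 0" using vv[OF that] by blast
    then have "rvec (vv hh) \<noteq> 0" using rvec_inj[of "vv hh" 0] by (simp add: rvec_zero)
    then show ?thesis using vv[OF that] by (simp add: hs_def)
  qed
  have seq: "C = affine hull C \<inter> \<Inter>F" using aff CF by simp
  have psub: "C \<subset> affine hull C \<inter> \<Inter>F'" if "F' \<subset> F" for F'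
  proof -
    have sub: "C \<subseteq> \<Inter>F'" using that CF by blast
    have "\<Inter>F' \<noteq> C"
    proof
      assume "\<Inter>F' = C"
      then have "P F'" using that FF0 by (auto simp: P_def)
      then have "card F \<le> card F'" by (rule minF)
      moreover have "card F' < card F" using that finF by (rule psubset_card_mono[rotated])
      ultimately show False by simp
    qed
    then show ?thesis using sub aff by auto
  qed
  have facet: "(C \<inter> {x. - rvec (vv hh) \<bullet> x = 0}) facet_of C" if "hh \<in> F" for hh
    using facet_of_polyhedron_explicit[of F C "\<lambda>hh. - rvec (vv hh)" "\<lambda>_. 0", OF finF seq faceq psub] that
    by blast
  show "a \<in> semigrp \<sigma>"
  proof (rule ccontr)
    assume "a \<notin> semigrp \<sigma>"
    then have "rvec a \<notin> \<Inter>F" using CF by (simp add: semigrp_def C_def)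
    then obtain hh where hh: "hh \<in> F" "rvec a \<notin> hh" by blast
    define v where "v = vv hh"
    have v0: "v \<noteq> 0" using vv[OF hh(1)] by (simp add: v_def)
    have neg: "rvec v \<bullet> rvec a < 0" using faceq[OF hh(1)] hh(2) unfolding v_def by force
    obtain g G where g: "primitive_vec g" "G > 0" "rvec v = real_of_int G *\<^sub>R rvec g"
      using primitive_of[OF v0] by blast
    have nonneg: "0 \<le> rvec g \<bullet> u" if "u \<in> C" for u
    proof -
      have "u \<in> hh" using that CF hh(1) by blast
      then have "0 \<le> rvec v \<bullet> u" using faceq[OF hh(1)] unfolding v_def by force
      then show ?thesis using g(2,3) by (simp add: zero_le_mult_iff)
    qed
    have seteq: "C \<inter> {u. rvec g \<bullet> u = 0} = C \<inter> {x. - rvec (vv hh) \<bullet> x = 0}"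
      using g(2,3) by (auto simp: v_def[symmetric])
    have "is_facet (C \<inter> {u. rvec g \<bullet> u = 0}) C"
      using facet[OF hh(1)] unfolding seteq is_facet_def facet_of_def by blast
    then have "primitive_facet_support_fn (dual_cone \<sigma>) g"
      unfolding primitive_facet_support_fn_def using g(1) nonneg by (simp add: C_def)
    then obtain i where i: "i < n" "h i = g" using facets
      by (metis (mono_tags, lifting) bij_betw_iff_bijections lessThan_iff mem_Collect_eq)
    have "rvec g \<bullet> rvec a < 0" using neg g(2,3) by (simp add: mult_less_0_iff)
    then have "hval g a < 0" by (simp add: rvec_inner)
    then show False using hyp i by auto
  qed
qed




lemma conv_nz:
  assumes "conv r s c \<noteq> 0"
  shows "\<exists>a. r a \<noteq> 0 \<and> s (c - a) \<noteq> 0"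
proof (rule ccontr)
  assume "\<not> ?thesis"
  then have "\<forall>a\<in>{a. r a \<noteq> 0}. r a * s (c - a) = 0" by auto
  then have "conv r s c = 0" unfolding conv_def by (intro sum.neutral) auto
  then show False using assms by simp
qed

lemma conv_smul0: "conv (\<lambda>b. k * monom 0 b) s = (\<lambda>b. k * s b)"
proof (cases "k = 0")
  case True then show ?thesis by (simp add: conv_def)
next
  case False
  then have e: "{a. k * monom 0 a \<noteq> 0} = {0}" by (auto simp: monom_def)
  show ?thesis unfolding conv_def e by (simp add: monom_def)
qed

definition Jset :: "(int^'d) set \<Rightarrow> (int^'d) set \<Rightarrow> (int^'d \<Rightarrow> complex) set" where
  "Jset S W = {r \<in> sgring S. {a. r a \<noteq> 0} \<subseteq> W}"

lemma ideal_J: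
  assumes WS: "W \<subseteq> S" and S0: "0 \<in> S" and up: "\<And>a b. a \<in> S \<Longrightarrow> b \<in> W \<Longrightarrow> a + b \<in> W"
  shows "mono_ideal S W = Jset S W"
proof
  have isJ: "is_ideal S (Jset S W)"
    unfolding is_ideal_def
  proof (intro conjI ballI)
    show "Jset S W \<subseteq> sgring S" by (auto simp: Jset_def)
    show "(\<lambda>_. 0) \<in> Jset S W" by (auto simp: Jset_def sgring_def)
  next
    fix r s assume r: "r \<in> Jset S W" and s: "s \<in> Jset S W"
    have sub: "{c. r c + s c \<noteq> 0} \<subseteq> {a. r a \<noteq> 0} \<union> {a. s a \<noteq> 0}" by auto
    have "finite {c. r c + s c \<noteq> 0}"
      using r s by (intro finite_subset[OF sub]) (auto simp: Jset_def sgring_def)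
    then show "(\<lambda>c. r c + s c) \<in> Jset S W" using r s sub WS by (auto simp: Jset_def sgring_def)
  next
    fix r s assume r: "r \<in> sgring S" and s: "s \<in> Jset S W"
    have sub: "{c. conv r s c \<noteq> 0} \<subseteq> (\<lambda>(a,b). a + b) ` ({a. r a \<noteq> 0} \<times> {a. s a \<noteq> 0})"
    proof
      fix c assume "c \<in> {c. conv r s c \<noteq> 0}"
      then obtain a where a: "r a \<noteq> 0" "s (c - a) \<noteq> 0" using conv_nz by blast
      then show "c \<in> (\<lambda>(a,b). a + b) ` ({a. r a \<noteq> 0} \<times> {a. s a \<noteq> 0})"
        by (intro image_eqI[of _ _ "(a, c - a)"]) auto
    qed
    have fin: "finite {c. conv r s c \<noteq> 0}"
      using r s by (intro finite_subset[OF sub]) (auto simp: Jset_def sgring_def)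
    have inW: "{c. conv r s c \<noteq> 0} \<subseteq> W"
    proof
      fix c assume "c \<in> {c. conv r s c \<noteq> 0}"
      then obtain a where a: "r a \<noteq> 0" "s (c - a) \<noteq> 0" using conv_nz by blast
      have "a \<in> S" using a r by (auto simp: sgring_def)
      moreover have "c - a \<in> W" using a s by (auto simp: Jset_def)
      ultimately have "a + (c - a) \<in> W" by (rule up)
      then show "c \<in> W" by simp
    qed
    show "conv r s \<in> Jset S W" using fin inW WS by (auto simp: Jset_def sgring_def)
  qed
  have monJ: "monom ` W \<subseteq> Jset S W"
  proof
    fix x assume "x \<in> monom ` W"
    then obtain a where a: "a \<in> W" "x = monom a" by auto
    have "{b. monom a b \<noteq> 0} = {a}" by (auto simp: monom_def)
    then show "x \<in> Jset S W" using a WS by (auto simp: Jset_def sgring_def)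
  qed
  show "mono_ideal S W \<subseteq> Jset S W"
    unfolding mono_ideal_def using isJ monJ by blast
  show "Jset S W \<subseteq> mono_ideal S W"
    unfolding mono_ideal_def
  proof (intro subsetI InterI)
    fix r I assume r: "r \<in> Jset S W" and I: "I \<in> {I. is_ideal S I \<and> monom ` W \<subseteq> I}"
    then have isI: "is_ideal S I" and monI: "monom ` W \<subseteq> I" by auto
    have m0: "(\<lambda>b. k * monom 0 b) \<in> sgring S" for k
    proof -
      have "{b. k * monom 0 b \<noteq> 0} \<subseteq> {0}" by (auto simp: monom_def)
      then show ?thesis using S0 by (auto simp: sgring_def intro: finite_subset)
    qed
    have sm: "(\<lambda>b. k * monom a b) \<in> I" if "a \<in> W" for a k
    proof -
      have "monom a \<in> I" using monI that by auto
      then have "conv (\<lambda>b. k * monom 0 b) (monom a) \<in> I" using isI m0 unfolding is_ideal_def by blast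
      then show ?thesis by (simp add: conv_smul0)
    qed
    have sums: "finite A \<Longrightarrow> A \<subseteq> W \<Longrightarrow> (\<lambda>b. \<Sum>a\<in>A. c a * monom a b) \<in> I" for A c
    proof (induction A rule: finite_induct)
      case empty then show ?case using isI by (simp add: is_ideal_def)
    next
      case (insert x F)
      have "(\<lambda>b. c x * monom x b + (\<Sum>a\<in>F. c a * monom a b)) \<in> I"
        using isI sm[of x "c x"] insert unfolding is_ideal_def by auto
      then show ?case using insert by simp
    qed
    have rr: "r = (\<lambda>b. \<Sum>a\<in>{a. r a \<noteq> 0}. r a * monom a b)"
    proof
      fix b
      have fin: "finite {a. r a \<noteq> 0}" using r by (auto simp: Jset_def sgring_def)
      have "(\<Sum>a\<in>{a. r a \<noteq> 0}. r a * monom a b) = (\<Sum>a\<in>{a. r a \<noteq> 0}. if a = b then r b else 0)"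
        by (rule sum.cong) (auto simp: monom_def)
      also have "\<dots> = r b" using fin by (simp add: sum.delta)
      finally show "r b = (\<Sum>a\<in>{a. r a \<noteq> 0}. r a * monom a b)" by simp
    qed
    have "(\<lambda>b. \<Sum>a\<in>{a. r a \<noteq> 0}. r a * monom a b) \<in> I"
      using r by (intro sums) (auto simp: Jset_def sgring_def)
    then show "r \<in> I" using rr by simp
  qed
qed




lemma ffact_zero: "0 \<le> x \<Longrightarrow> x \<le> m \<Longrightarrow> ffact x m = 0"
  unfolding ffact_def by (auto intro!: prod_zero bexI[where x = x])

lemma ffact_nz: "ffact x m \<noteq> 0 \<Longrightarrow> 0 \<le> x \<Longrightarrow> m < x"
  using ffact_zero[of x m] by force

theorem mainTheorem6:
  fixes \<sigma> :: "(real^'d) set"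
    and h :: "nat \<Rightarrow> int^'d" and n :: nat
    and f :: "int^'d \<Rightarrow> complex" and d :: "int^'d"
    and B :: "(nat \<Rightarrow> nat) set"
  assumes cone: "rat_poly_cone \<sigma>" and fulldim: "full_dimensional \<sigma>"
    and strongly: "strongly_convex \<sigma>"
    and facets: "bij_betw h {..<n} {g. primitive_facet_support_fn (dual_cone \<sigma>) g}"
    and fpoly: "poly_fun f"
    and fdiv: "\<exists>g. poly_fun g \<and> (\<forall>a. f a = of_int (Hd h n d a) * g a)"
    and dnz: "d \<noteq> 0" and negd: "- d \<in> semigrp \<sigma>"
    and Bdom: "\<forall>\<beta>\<in>B. \<forall>i\<ge>n. \<beta> i = 0"
    and Bcompat: "\<forall>\<beta>\<in>B. compatible_tuple h n d \<beta>"
  shows "delta_compatible f d (mono_ideal (semigrp \<sigma>) (W_set h n (semigrp \<sigma>) B))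
    \<and> (\<forall>b\<in>W_set h n (semigrp \<sigma>) B. \<bar>valf f d b\<bar> \<noteq> \<infinity> \<longrightarrow>
           vpt f d b \<in> W_set h n (semigrp \<sigma>) B)"
proof -
  define S where "S = semigrp \<sigma>"
  have Sd: "\<And>a. a \<in> S \<longleftrightarrow> (\<forall>i<n. 0 \<le> hval (h i) a)"
    unfolding S_def using semigrp_facets[OF cone strongly facets] by blast
  have cge: "\<And>i. i < n \<Longrightarrow> 0 \<le> hval (h i) (- d)" using negd Sd unfolding S_def by blast
  have S0: "0 \<in> S" unfolding Sd by (simp add: hval_def)
  define W where "W = W_set h n S B"
  have WS: "W \<subseteq> S" by (auto simp: W_def W_set_def W_beta_def)
  have up: "a + b \<in> W" if a: "a \<in> S" and b: "b \<in> W" for a b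
  proof -
    obtain \<beta> where \<beta>: "\<beta> \<in> B" "b \<in> W_beta h n S \<beta>" using b by (auto simp: W_def W_set_def)
    have "a + b \<in> W_beta h n S \<beta>"
      using \<beta>(2) a unfolding W_beta_def Sd by (auto simp: hval_add add_increasing)
    then show ?thesis using \<beta>(1) by (auto simp: W_def W_set_def)
  qed
  obtain g where g: "\<And>a. f a = of_int (Hd h n d a) * g a" using fdiv by blast
  have Hz: "f a = 0" if "i < n" "ffact (hval (h i) a) (hval (h i) (-d) - 1) = 0" for a i
  proof -
    have "Hd h n d a = 0" unfolding Hd_def using that by (intro prod_zero) auto
    then show ?thesis using g by simp
  qed
  have keyA: "a + d \<in> W" if a: "a \<in> W" and fa: "f a \<noteq> 0" for a
  proof -
    obtain \<beta> where \<beta>: "\<beta> \<in> B" "a \<in> W_beta h n S \<beta>" using a by (auto simp: W_def W_set_def)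
    have aS: "a \<in> S" using \<beta>(2) by (simp add: W_beta_def)
    have nn: "0 \<le> hval (h i) (a + d)" if i: "i < n" for i
    proof -
      have "ffact (hval (h i) a) (hval (h i) (-d) - 1) \<noteq> 0" using Hz[OF i, of a] fa by blast
      then have "hval (h i) (-d) - 1 < hval (h i) a" using ffact_nz aS Sd i by blast
      then show ?thesis by (simp add: hval_add hval_minus)
    qed
    have "a + d \<in> W_beta h n S \<beta>"
      unfolding W_beta_def
    proof (intro CollectI conjI allI impI)
      show "a + d \<in> S" using nn Sd by blast
    next
      fix i assume i: "i < n"
      have "\<beta> i = 0 \<or> hval (h i) d = 0" using Bcompat \<beta>(1) i by (auto simp: compatible_tuple_def)
      then show "int (\<beta> i) \<le> hval (h i) (a + d)"
        using nn[OF i] \<beta>(2) i by (auto simp: W_beta_def hval_add)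
    qed
    then show ?thesis using \<beta>(1) by (auto simp: W_def W_set_def)
  qed
  have MI: "mono_ideal S W = Jset S W" by (rule ideal_J[OF WS S0 up])
  have part1: "delta_compatible f d (mono_ideal S W)"
    unfolding delta_compatible_def MI
  proof
    fix r assume r: "r \<in> Jset S W"
    have sub: "{b. delta_op f d r b \<noteq> 0} \<subseteq> (\<lambda>a. a + d) ` {a. r a \<noteq> 0}"
      by (auto simp: delta_op_def intro: image_eqI[of _ _ "_ - d"])
    have fin: "finite {b. delta_op f d r b \<noteq> 0}"
      using r by (intro finite_subset[OF sub]) (auto simp: Jset_def sgring_def)
    have inW: "{b. delta_op f d r b \<noteq> 0} \<subseteq> W"
    proof
      fix b assume "b \<in> {b. delta_op f d r b \<noteq> 0}"
      then have "f (b - d) \<noteq> 0" "r (b - d) \<noteq> 0" by (auto simp: delta_op_def)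
      then have "(b - d) + d \<in> W" using r by (intro keyA) (auto simp: Jset_def)
      then show "b \<in> W" by simp
    qed
    show "delta_op f d r \<in> Jset S W" using fin inW WS by (auto simp: Jset_def sgring_def)
  qed
  have part2: "vpt f d b \<in> W" if bW: "b \<in> W" and vfin: "\<bar>valf f d b\<bar> \<noteq> \<infinity>" for b
  proof -
    define Z where "Z = {t. \<exists>v. f v = 0 \<and> rvec v = rvec b + t *\<^sub>R rvec d}"
    have vZ: "valf f d b = Inf (ereal ` Z)" unfolding valf_def Z_def
      by (rule arg_cong[where f = Inf]) auto
    obtain rv where rv: "valf f d b = ereal rv" using vfin by (cases "valf f d b") auto
    have low: "rv \<le> t" if "t \<in> Z" for t
    proof -
      have "Inf (ereal ` Z) \<le> ereal t" using that by (intro Inf_lower) auto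
      then show ?thesis using rv vZ by simp
    qed
    have "Inf (ereal ` Z) < ereal (rv + 1)" using rv vZ by simp
    then obtain t0 where t0: "t0 \<in> Z" "ereal t0 < ereal (rv + 1)"
      by (auto simp: Inf_less_iff)
    define P where "P = {t. rv \<le> t \<and> t < rv + 1 \<and> t \<in> Z}"
    have pv: "pval f d b = Max P" unfolding pval_def P_def Z_def rv by simp
    obtain j where j: "d $ j \<noteq> 0" using dnz by (auto simp: vec_eq_iff)
    define D where "D = real_of_int (d $ j)"
    have D0: "D \<noteq> 0" using j by (simp add: D_def)
    define K where "K = \<lceil>(\<bar>rv\<bar> + 1) * \<bar>D\<bar>\<rceil>"
    have Psub: "P \<subseteq> (\<lambda>m. real_of_int m / D) ` {-K..K}"
    proof
      fix t assume t: "t \<in> P"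
      then obtain v where v: "rvec v = rvec b + t *\<^sub>R rvec d" by (auto simp: P_def Z_def)
      define m where "m = v $ j - b $ j"
      have "rvec v $ j = rvec b $ j + t * rvec d $ j" using v by simp
      then have tm: "real_of_int m = t * D" by (simp add: rvec_def m_def D_def)
      have tb: "\<bar>t\<bar> \<le> \<bar>rv\<bar> + 1" using t by (auto simp: P_def)
      have "\<bar>real_of_int m\<bar> \<le> (\<bar>rv\<bar> + 1) * \<bar>D\<bar>" unfolding tm abs_mult
        by (rule mult_right_mono[OF tb]) simp
      then have "\<bar>m\<bar> \<le> K" unfolding K_def by linarith
      then have "m \<in> {-K..K}" by auto
      moreover have "t = real_of_int m / D" using tm D0 by simp
      ultimately show "t \<in> (\<lambda>m. real_of_int m / D) ` {-K..K}" by blast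
    qed
    have finP: "finite P" by (rule finite_subset[OF Psub]) simp
    have "t0 \<in> P" using t0 low by (auto simp: P_def)
    then have "Max P \<in> P" using finP by (intro Max_in) auto
    then have tpP: "pval f d b \<in> P" using pv by simp
    define tp where "tp = pval f d b"
    have tp1: "tp < rv + 1" and tpZ: "tp \<in> Z" using tpP by (auto simp: P_def tp_def)
    obtain v0 where v0: "f v0 = 0" "rvec v0 = rvec b + tp *\<^sub>R rvec d" using tpZ by (auto simp: Z_def)
    have vpt: "vpt f d b = v0" unfolding vpt_def tp_def[symmetric]
      by (rule the_equality) (use v0(2) in \<open>auto simp: rvec_inj\<close>, metis v0(2) rvec_inj)
    have hv: "real_of_int (hval gg v0) = real_of_int (hval gg b) + tp * real_of_int (hval gg d)" for gg
    proof -
      have "rvec gg \<bullet> rvec v0 = rvec gg \<bullet> rvec b + tp * (rvec gg \<bullet> rvec d)"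
        using v0(2) by (simp add: inner_add_right)
      then show ?thesis by (simp add: rvec_inner)
    qed
    obtain \<beta> where \<beta>: "\<beta> \<in> B" "b \<in> W_beta h n S \<beta>" using bW by (auto simp: W_def W_set_def)
    have bS: "b \<in> S" using \<beta>(2) by (simp add: W_beta_def)
    have nn: "0 \<le> hval (h i) v0" if i: "i < n" for i
    proof (rule ccontr)
      assume "\<not> 0 \<le> hval (h i) v0"
      then have xneg: "hval (h i) v0 < 0" by simp
      define x where "x = hval (h i) v0"
      define c where "c = hval (h i) (- d)"
      have c0: "0 \<le> c" using cge i by (simp add: c_def)
      have "c \<noteq> 0"
      proof
        assume "c = 0"
        then have "hval (h i) d = 0" by (simp add: c_def hval_minus)
        then have "hval (h i) v0 = hval (h i) b" using hv[of "h i"] by simp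
        then show False using xneg bS Sd i by force
      qed
      with c0 have cpos: "0 < c" by simp
      define k where "k = - (x div c)"
      have "x div c < 0" using xneg cpos unfolding x_def
        by (simp add: pos_imp_zdiv_neg_iff)
      then have k1: "1 \<le> k" unfolding k_def by linarith
      define w where "w = v0 + k *s (- d)"
      have "hval (h i) w = x + k * c"
        unfolding w_def x_def c_def by (simp only: hval_add hval_smult)
      also have "\<dots> = x - x div c * c" by (simp add: k_def)
      also have "\<dots> = x mod c" by (rule minus_div_mult_eq_mod)
      finally have hw: "hval (h i) w = x mod c" .
      have "ffact (hval (h i) w) (hval (h i) (- d) - 1) = 0"
        unfolding hw c_def[symmetric] using cpos
        by (intro ffact_zero) (auto simp: pos_mod_sign pos_mod_bound)
      then have fw: "f w = 0" by (rule Hz[OF i])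
      have "rvec w = rvec v0 + real_of_int k *\<^sub>R (- rvec d)"
        unfolding w_def by (simp only: rvec_add rvec_smult rvec_minus)
      also have "\<dots> = rvec b + (tp - real_of_int k) *\<^sub>R rvec d"
        using v0(2) by (simp add: scaleR_diff_left)
      finally have "rvec w = rvec b + (tp - real_of_int k) *\<^sub>R rvec d" .
      then have "tp - real_of_int k \<in> Z" using fw by (auto simp: Z_def)
      then have "rv \<le> tp - real_of_int k" by (rule low)
      then show False using k1 tp1 by linarith
    qed
    have "v0 \<in> W_beta h n S \<beta>"
      unfolding W_beta_def
    proof (intro CollectI conjI allI impI)
      show "v0 \<in> S" using nn Sd by blast
    next
      fix i assume i: "i < n"
      have "\<beta> i = 0 \<or> hval (h i) d = 0" using Bcompat \<beta>(1) i by (auto simp: compatible_tuple_def)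
      moreover have "hval (h i) d = 0 \<Longrightarrow> hval (h i) v0 = hval (h i) b" using hv[of "h i"] by simp
      ultimately show "int (\<beta> i) \<le> hval (h i) v0"
        using nn[OF i] \<beta>(2) i by (auto simp: W_beta_def)
    qed
    then show ?thesis using \<beta>(1) vpt by (auto simp: W_def W_set_def)
  qed
  show ?thesis
  proof (intro conjI ballI impI)
    show "delta_compatible f d (mono_ideal (semigrp \<sigma>) (W_set h n (semigrp \<sigma>) B))"
      using part1 unfolding S_def W_def .
  next
    fix b assume "b \<in> W_set h n (semigrp \<sigma>) B" "\<bar>valf f d b\<bar> \<noteq> \<infinity>"
    then show "vpt f d b \<in> W_set h n (semigrp \<sigma>) B"
      using part2[of b] unfolding S_def W_def apply - apply (erule meta_impE) apply assumption
      apply (erule meta_impE) apply assumption apply assumption done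
  qed
qed


end
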